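(* Suppose $g=1$ (so $f$ has degree $3$) and $\mathfrak{s}\subset\mathcal{R}$ is a cluster of cardinality $2$. Then $B_{f,\mathfrak{s}}=4v(2)$.
   Context: $K$ is a field of characteristic $0$, complete for a discrete valuation $v$ (values in $\mathbb{Q}\cup\{+\infty\}$) with algebraically closed residue field of characteristic $2$; $v$ extends to a fixed algebraic closure $\bar K$. $f\in K[x]$ is separable of degree $2g+1$ with root set $\mathcal{R}\subset\bar K$. Discs: $D_{\alpha,b}=\{z\in\bar K:v(z-\alpha)\ge b\}$. A nonempty $\mathfrak{s}\subseteq\mathcal{R}$ is a cluster if $\mathfrak{s}=D\cap\mathcal{R}$ for some disc $D$; $d_+(\mathfrak{s})=\min_{a\ne a'\in\mathfrak{s}}v(a-a')$; for $\mathfrak{s}\ne\mathcal{R}$, the parent $\mathfrak{s}'$ is the smallest cluster properly containing $\mathfrak{s}$ and $d_-(\mathfrak{s})=d_+(\mathfrak{s}')$. For nonzero $h\in\bar K[z]$, $v(h)$ is the minimum valuation of its coefficients. A part-square decomposition of $h$ is $h=q^2+\rho$ with $\deg q\le\lceil\deg h/2\rceil$, and $t_{q,\rho}=v(\rho)-v(h)$. It is good if $t_{q,\rho}\ge2v(2)$ or no part-square decomposition $h=\tilde q^2+\tilde\rho$ has $t_{\tilde q,\tilde\rho}>t_{q,\rho}$. For a finite nonempty multiset $S\subset\bar K$ and disc $D=D_{\alpha,v(\beta)}$, $\mathfrak{t}^{S}(D)=\min\{t_{q,\rho},2v(2)\}$ where $h$ has root multiset $S$ and $h(\alpha+\beta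 z)=q^2+\rho$ is any good part-square decomposition (independent of choices). For an even-cardinality cluster $\mathfrak{s}$ and $\alpha\in\mathfrak{s}$, for $b\ge0$ set $\mathfrak{t}^{\mathfrak{s}}_+(b)=\mathfrak{t}^{\mathfrak{s}}(D_{\alpha,d_+(\mathfrak{s})-b})$, $\mathfrak{t}^{\mathfrak{s}}_-(b)=\mathfrak{t}^{\mathcal{R}\setminus\mathfrak{s}}(D_{\alpha,d_-(\mathfrak{s})+b})$, $b_0(\mathfrak{t}^{\mathfrak{s}}_\pm)$ the least $b\ge0$ at which $\mathfrak{t}^{\mathfrak{s}}_\pm$ equals $2v(2)$, and $B_{f,\mathfrak{s}}=b_0(\mathfrak{t}^{\mathfrak{s}}_+)+b_0(\mathfrak{t}^{\mathfrak{s}}_-)$. *)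

theory Defs
  imports Complex_Main "HOL-Library.Extended_Real" "HOL-Library.Multiset"
    "HOL-Computational_Algebra.Polynomial" "HOL-Computational_Algebra.Polynomial_Factorial"
begin

text \<open>The type 'L plays the role of the fixed algebraic closure of K;
  K is a subset of 'L (a subfield); v : 'L -> Q \<union> {+\<infinity>} is a valuation on 'L, modelled
  with values in ereal (v x = \<infinity> iff x = 0, finite values rational).\<close>

definition is_subfield :: "'L::field set \<Rightarrow> bool" where
  "is_subfield K \<longleftrightarrow> 0 \<in> K \<and> 1 \<in> K \<and>
     (\<forall>x\<in>K. \<forall>y\<in>K. x + y \<in> K \<and> x - y \<in> K \<and> x * y \<in> K) \<and>
     (\<forall>x\<in>K. x \<noteq> 0 \<longrightarrow> inverse x \<in> K)"

definition is_valuation :: "('L::field \<Rightarrow> ereal) \<Rightarrow> bool" where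
  "is_valuation v \<longleftrightarrow>
     (\<forall>x. v x = \<infinity> \<longleftrightarrow> x = 0) \<and>
     (\<forall>x. x \<noteq> 0 \<longrightarrow> (\<exists>r::rat. v x = ereal (real_of_rat r))) \<and>
     (\<forall>x y. v (x * y) = v x + v y) \<and>
     (\<forall>x y. min (v x) (v y) \<le> v (x + y))"

definition discrete_on :: "('L::field \<Rightarrow> ereal) \<Rightarrow> 'L set \<Rightarrow> bool" where
  "discrete_on v K \<longleftrightarrow>
     (\<exists>c::rat. c > 0 \<and> v ` (K - {0}) = {ereal (real_of_rat (of_int n * c)) | n. True})"

definition complete_wrt :: "('L::field \<Rightarrow> ereal) \<Rightarrow> 'L set \<Rightarrow> bool" where
  "complete_wrt v K \<longleftrightarrow>
     (\<forall>u::nat \<Rightarrow> 'L. (\<forall>n. u n \<in> K) \<longrightarrow>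
        (\<forall>M::real. \<exists>N. \<forall>m\<ge>N. \<forall>n\<ge>N. ereal M \<le> v (u m - u n)) \<longrightarrow>
        (\<exists>l\<in>K. \<forall>M::real. \<exists>N. \<forall>n\<ge>N. ereal M \<le> v (u n - l)))"

text \<open>The residue field O_K / m_K is algebraically closed: every polynomial over O_K whose
  reduction is nonconstant (leading coefficient a unit, degree \<ge> 1) has a root modulo m_K.\<close>
definition residue_alg_closed :: "('L::field \<Rightarrow> ereal) \<Rightarrow> 'L set \<Rightarrow> bool" where
  "residue_alg_closed v K \<longleftrightarrow>
     (\<forall>p::'L poly. (\<forall>i. coeff p i \<in> K \<and> 0 \<le> v (coeff p i)) \<longrightarrow> degree p \<ge> 1 \<longrightarrow>
        v (lead_coeff p) = 0 \<longrightarrow> (\<exists>a\<in>K. 0 \<le> v a \<and> 0 < v (poly p a)))"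

definition alg_closed :: "'L::field itself \<Rightarrow> bool" where
  "alg_closed _ \<longleftrightarrow> (\<forall>p::'L poly. degree p \<ge> 1 \<longrightarrow> (\<exists>x. poly p x = 0))"

definition algebraic_over :: "'L::field set \<Rightarrow> bool" where
  "algebraic_over K \<longleftrightarrow>
     (\<forall>x::'L. \<exists>p. p \<noteq> 0 \<and> (\<forall>i. coeff p i \<in> K) \<and> poly p x = 0)"

definition dvf_setting :: "'L::field_char_0 set \<Rightarrow> ('L \<Rightarrow> ereal) \<Rightarrow> bool" where
  "dvf_setting K v \<longleftrightarrow>
     is_subfield K \<and> alg_closed TYPE('L) \<and> algebraic_over K \<and>
     is_valuation v \<and> discrete_on v K \<and> complete_wrt v K \<and>
     residue_alg_closed v K \<and> 0 < v (2::'L)"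

definition disc :: "('L::field \<Rightarrow> ereal) \<Rightarrow> 'L \<Rightarrow> ereal \<Rightarrow> 'L set" where
  "disc v \<alpha> b = {z. b \<le> v (z - \<alpha>)}"

definition is_cluster :: "('L::field \<Rightarrow> ereal) \<Rightarrow> 'L set \<Rightarrow> 'L set \<Rightarrow> bool" where
  "is_cluster v R s \<longleftrightarrow> s \<noteq> {} \<and> (\<exists>\<alpha> (b::rat). s = disc v \<alpha> (ereal (real_of_rat b)) \<inter> R)"

definition dplus :: "('L::field \<Rightarrow> ereal) \<Rightarrow> 'L set \<Rightarrow> ereal" where
  "dplus v s = Min {v (a - a') | a a'. a \<in> s \<and> a' \<in> s \<and> a \<noteq> a'}"

definition parent :: "('L::field \<Rightarrow> ereal) \<Rightarrow> 'L set \<Rightarrow> 'L set \<Rightarrow> 'L set" where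
  "parent v R s = (THE p. is_cluster v R p \<and> s \<subset> p \<and>
                      (\<forall>c. is_cluster v R c \<and> s \<subset> c \<longrightarrow> p \<subseteq> c))"

definition dminus :: "('L::field \<Rightarrow> ereal) \<Rightarrow> 'L set \<Rightarrow> 'L set \<Rightarrow> ereal" where
  "dminus v R s = dplus v (parent v R s)"

definition vpoly :: "('L::field \<Rightarrow> ereal) \<Rightarrow> 'L poly \<Rightarrow> ereal" where
  "vpoly v h = (INF i. v (coeff h i))"

definition is_psd :: "'L::field poly \<Rightarrow> 'L poly \<Rightarrow> 'L poly \<Rightarrow> bool" where
  "is_psd h q \<rho> \<longleftrightarrow> h = q\<^sup>2 + \<rho> \<and> degree q \<le> nat \<lceil>real (degree h) / 2\<rceil>"

definition tpsd :: "('L::field \<Rightarrow> ereal) \<Rightarrow> 'L poly \<Rightarrow> 'L poly \<Rightarrow> ereal" where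
  "tpsd v h \<rho> = vpoly v \<rho> - vpoly v h"

definition good_psd :: "('L::field \<Rightarrow> ereal) \<Rightarrow> 'L poly \<Rightarrow> 'L poly \<Rightarrow> 'L poly \<Rightarrow> bool" where
  "good_psd v h q \<rho> \<longleftrightarrow> is_psd h q \<rho> \<and>
     (2 * v 2 \<le> tpsd v h \<rho> \<or> \<not> (\<exists>q' \<rho>'. is_psd h q' \<rho>' \<and> tpsd v h \<rho> < tpsd v h \<rho>'))"

definition poly_of_roots :: "'L::field multiset \<Rightarrow> 'L poly" where
  "poly_of_roots S = prod_mset (image_mset (\<lambda>a. [:- a, 1:]) S)"

text \<open>t^S(D_{\<alpha>, v(\<beta>)}), computed with a (chosen) good part-square decomposition of h(\<alpha> + \<beta> z).\<close>
definition tdisc :: "('L::field \<Rightarrow> ereal) \<Rightarrow> 'L multiset \<Rightarrow> 'L \<Rightarrow> 'L \<Rightarrow> ereal" where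
  "tdisc v S \<alpha> \<beta> =
     (let h = pcompose (poly_of_roots S) [:\<alpha>, \<beta>:];
          qr = (SOME qr. good_psd v h (fst qr) (snd qr))
      in min (tpsd v h (snd qr)) (2 * v 2))"

text \<open>t^S(D_{\<alpha>, r}) using a chosen \<beta> with v(\<beta>) = r.\<close>
definition tdisc_r :: "('L::field \<Rightarrow> ereal) \<Rightarrow> 'L multiset \<Rightarrow> 'L \<Rightarrow> ereal \<Rightarrow> ereal" where
  "tdisc_r v S \<alpha> r = tdisc v S \<alpha> (SOME \<beta>. v \<beta> = r)"

definition tplus :: "('L::field \<Rightarrow> ereal) \<Rightarrow> 'L set \<Rightarrow> 'L \<Rightarrow> rat \<Rightarrow> ereal" where
  "tplus v s \<alpha> b = tdisc_r v (mset_set s) \<alpha> (dplus v s - ereal (real_of_rat b))"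

definition tminus :: "('L::field \<Rightarrow> ereal) \<Rightarrow> 'L set \<Rightarrow> 'L set \<Rightarrow> 'L \<Rightarrow> rat \<Rightarrow> ereal" where
  "tminus v R s \<alpha> b = tdisc_r v (mset_set (R - s)) \<alpha> (dminus v R s + ereal (real_of_rat b))"

definition b0 :: "('L::field \<Rightarrow> ereal) \<Rightarrow> (rat \<Rightarrow> ereal) \<Rightarrow> rat" where
  "b0 v F = (LEAST b. 0 \<le> b \<and> F b = 2 * v 2)"

definition Bfs :: "('L::field \<Rightarrow> ereal) \<Rightarrow> 'L set \<Rightarrow> 'L set \<Rightarrow> 'L \<Rightarrow> ereal" where
  "Bfs v R s \<alpha> = ereal (real_of_rat (b0 v (tplus v s \<alpha>) + b0 v (tminus v R s \<alpha>)))"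

end

theory Submission
  imports Defs
begin


lemma val_basic:
  assumes "is_valuation v"
  shows val_mult: "v (x*y) = v x + v y" and val_ultra: "min (v x) (v y) \<le> v (x + y)"
    and val_zero: "v 0 = \<infinity>" and val_nz: "x \<noteq> 0 \<Longrightarrow> \<exists>r::rat. v x = ereal (real_of_rat r)"
    and val_inf_iff: "v x = \<infinity> \<longleftrightarrow> x = 0"
  using assms unfolding is_valuation_def by auto

lemma val_one: assumes "is_valuation v" shows "v 1 = 0"
proof -
  obtain r where r: "v 1 = ereal (real_of_rat r)" using val_nz[OF assms, of 1] by auto
  have "v 1 = v 1 + v 1" using val_mult[OF assms, of 1 1] by simp
  then show ?thesis using r by simp
qed

lemma val_uminus: assumes "is_valuation v" shows "v (- x) = v x"
proof -
  obtain r where r: "v (-1) = ereal (real_of_rat r)" using val_nz[OF assms, of "-1"] by auto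
  have "0 = v (-1) + v (-1)" using val_mult[OF assms, of "-1" "-1"] val_one[OF assms] by simp
  then have "v (-1) = 0" using r by (simp add: zero_ereal_def)
  then show ?thesis using val_mult[OF assms, of "-1" x] by simp
qed

lemma val_diff: assumes "is_valuation v" shows "min (v x) (v y) \<le> v (x - y)"
  using val_ultra[OF assms, of x "-y"] val_uminus[OF assms, of y] by simp

lemma val_sym: assumes "is_valuation v" shows "v (x - y) = v (y - x)"
  using val_uminus[OF assms, of "x - y"] by simp



lemma tdisc_eval:
  assumes "is_psd (pcompose (poly_of_roots S) [:\<alpha>, \<beta>:]) q0 \<rho>0"
    and "tpsd v (pcompose (poly_of_roots S) [:\<alpha>, \<beta>:]) \<rho>0 = T"
    and bound: "\<And>q \<rho>. is_psd (pcompose (poly_of_roots S) [:\<alpha>, \<beta>:]) q \<rho> \<Longrightarrow> T < 2 * v 2 \<Longrightarrow>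
       tpsd v (pcompose (poly_of_roots S) [:\<alpha>, \<beta>:]) \<rho> \<le> T"
  shows "tdisc v S \<alpha> \<beta> = min T (2 * v 2)"
proof -
  define h where "h = pcompose (poly_of_roots S) [:\<alpha>, \<beta>:]"
  have g0: "good_psd v h q0 \<rho>0"
    unfolding good_psd_def using assms unfolding h_def[symmetric]
    by (metis not_le order.strict_trans2)
  define qr where "qr = (SOME qr. good_psd v h (fst qr) (snd qr))"
  have g: "good_psd v h (fst qr) (snd qr)"
    unfolding qr_def by (rule someI[of _ "(q0, \<rho>0)"]) (use g0 in simp)
  have td: "tdisc v S \<alpha> \<beta> = min (tpsd v h (snd qr)) (2 * v 2)"
    unfolding tdisc_def h_def qr_def Let_def by simp
  have ps: "is_psd h (fst qr) (snd qr)" using g unfolding good_psd_def by simp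
  show ?thesis
  proof (cases "2 * v 2 \<le> tpsd v h (snd qr)")
    case True
    then have "\<not> T < 2 * v 2" using bound[OF ps[unfolded h_def]] unfolding h_def by fastforce
    then show ?thesis using True td by (simp add: min_def)
  next
    case False
    then have nb: "\<not> tpsd v h (snd qr) < T" using g assms(1,2) unfolding good_psd_def h_def by blast
    show ?thesis
    proof (cases "T < 2 * v 2")
      case True
      then have "tpsd v h (snd qr) \<le> T" using bound[OF ps[unfolded h_def]] unfolding h_def by simp
      then show ?thesis using nb td by simp
    next
      case False
      then show ?thesis using nb td \<open>\<not> 2 * v 2 \<le> _\<close> by (simp add: min_def)
    qed
  qed
qed

lemma vpoly_le: "vpoly v p \<le> v (coeff p i)"
  unfolding vpoly_def by (rule INF_lower) simp

lemma vpoly3: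
  assumes "v 0 = \<infinity>"
  shows "vpoly v [:a, b, c:] = min (v a) (min (v b) (v c))"
proof (rule antisym)
  show "vpoly v [:a, b, c:] \<le> min (v a) (min (v b) (v c))"
    using vpoly_le[of v "[:a,b,c:]" 0] vpoly_le[of v "[:a,b,c:]" 1] vpoly_le[of v "[:a,b,c:]" 2]
    by (simp add: numeral_2_eq_2)
  show "min (v a) (min (v b) (v c)) \<le> vpoly v [:a, b, c:]"
    unfolding vpoly_def
  proof (rule INF_greatest)
    fix i :: nat
    show "min (v a) (min (v b) (v c)) \<le> v (coeff [:a, b, c:] i)"
      using assms by (cases i; cases "i - 1"; cases "i - 2") (auto simp: coeff_pCons min.coboundedI1 min.coboundedI2 split: nat.splits)
  qed
qed

lemma deg1_form: "degree (q::'a::zero poly) \<le> 1 \<Longrightarrow> q = [:coeff q 0, coeff q 1:]"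
  by (auto simp: poly_eq_iff coeff_pCons coeff_eq_0 split: nat.splits)

lemma sq_lin: "[:e, u:]\<^sup>2 = [:e*e, 2*e*u, u*u:]" for e u :: "'a::comm_ring_1"
  by (simp add: power2_eq_square algebra_simps)



lemma val_real: assumes "is_valuation v" "x \<noteq> 0" obtains r where "v x = ereal r"
  using val_nz[OF assms] by auto

lemma tplus_core:
  assumes V: "is_valuation v" and vd: "v (\<alpha> - a') = ereal D" and vb: "v \<beta> = ereal (D - b)"
    and b0: "0 \<le> b" and v2: "v 2 = ereal W"
  shows "tdisc v {#\<alpha>, a'#} \<alpha> \<beta> = min (ereal b) (2 * v 2)"
proof -
  define \<delta> where "\<delta> = \<alpha> - a'"
  have bnz: "\<beta> \<noteq> 0" using vb val_zero[OF V] by auto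
  have dnz: "\<delta> \<noteq> 0" using vd val_zero[OF V] unfolding \<delta>_def by auto
  have h: "pcompose (poly_of_roots {#\<alpha>, a'#}) [:\<alpha>, \<beta>:] = [:0, \<beta>*\<delta>, \<beta>*\<beta>:]"
    unfolding poly_of_roots_def \<delta>_def by (simp add: pcompose_mult pcompose_pCons algebra_simps)
  have vbd: "v (\<beta>*\<delta>) = ereal (2*D - b)" using val_mult[OF V] vb vd \<delta>_def by simp
  have vbb: "v (\<beta>*\<beta>) = ereal (2*D - 2*b)" using val_mult[OF V] vb by simp
  have vh: "vpoly v [:0, \<beta>*\<delta>, \<beta>*\<beta>:] = ereal (2*D - 2*b)"
    using vpoly3[of v 0 "\<beta>*\<delta>" "\<beta>*\<beta>", OF val_zero[OF V]] val_zero[OF V] vbd vbb b0 by simp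
  have degh: "degree [:0, \<beta>*\<delta>, \<beta>*\<beta>:] = 2" using bnz by simp
  have psd0: "is_psd [:0, \<beta>*\<delta>, \<beta>*\<beta>:] [:0, \<beta>:] [:0, \<beta>*\<delta>:]"
    unfolding is_psd_def degh by (simp add: power2_eq_square)
  have vr0: "vpoly v [:0, \<beta>*\<delta>:] = ereal (2*D - b)"
    using vpoly3[of v 0 "\<beta>*\<delta>" 0, OF val_zero[OF V]] val_zero[OF V] vbd by simp
  have t0: "tpsd v [:0, \<beta>*\<delta>, \<beta>*\<beta>:] [:0, \<beta>*\<delta>:] = ereal b"
    unfolding tpsd_def vr0 vh by simp
  show ?thesis
  proof (rule tdisc_eval[OF psd0[folded h] t0[folded h]])
    fix q \<rho>
    assume ps: "is_psd (pcompose (poly_of_roots {#\<alpha>, a'#}) [:\<alpha>, \<beta>:]) q \<rho>"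
      and lt: "ereal b < 2 * v 2"
    have lt': "b < 2 * W" using lt v2 by simp
    have dq: "degree q \<le> 1" using ps unfolding is_psd_def h degh by simp
    define e where "e = coeff q 0"
    define u where "u = coeff q 1"
    have qf: "q = [:e, u:]" unfolding e_def u_def by (rule deg1_form[OF dq])
    have rf: "\<rho> = [:- (e*e), \<beta>*\<delta> - 2*e*u, \<beta>*\<beta> - u*u:]"
    proof -
      have "\<rho> = [:0, \<beta>*\<delta>, \<beta>*\<beta>:] - [:e*e, 2*e*u, u*u:]"
        using ps unfolding is_psd_def h qf sq_lin by (simp add: eq_diff_eq)
      then show ?thesis by simp
    qed
    show "tpsd v (pcompose (poly_of_roots {#\<alpha>, a'#}) [:\<alpha>, \<beta>:]) \<rho> \<le> ereal b"
    proof (rule ccontr)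
      assume "\<not> ?thesis"
      then have gt: "ereal b < vpoly v \<rho> - ereal (2*D - 2*b)" unfolding tpsd_def h vh by simp
      have "ereal (2*D - b) < vpoly v \<rho>"
      proof (cases "vpoly v \<rho>")
        case (real r) then show ?thesis using gt by simp
      next
        case PInf then show ?thesis by simp
      next
        case MInf then show ?thesis using gt by simp
      qed
      then have c0: "ereal (2*D - b) < v (e*e)" and c1: "ereal (2*D - b) < v (\<beta>*\<delta> - 2*e*u)"
        and c2: "ereal (2*D - b) < v (\<beta>*\<beta> - u*u)"
        using vpoly_le[of v \<rho> 0] vpoly_le[of v \<rho> 1] vpoly_le[of v \<rho> 2] val_uminus[OF V, of "e*e"]
        unfolding rf by (auto simp: numeral_2_eq_2)
      have split: "\<beta>*\<delta> = (\<beta>*\<delta> - 2*e*u) + 2*e*u" by simp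
      show False
      proof (cases "e = 0 \<or> u = 0")
        case True
        then show False using c1 vbd by auto
      next
        case False
        then obtain E U where vE: "v e = ereal E" and vU: "v u = ereal U"
          using val_real[OF V] by metis
        have "min (v (\<beta>*\<beta>)) (v (\<beta>*\<beta> - u*u)) \<le> v (u*u)"
          using val_diff[OF V, of "\<beta>*\<beta>" "\<beta>*\<beta> - u*u"] by simp
        moreover have "ereal (2*D - 2*b) \<le> v (\<beta>*\<beta> - u*u)"
          using c2 b0 order_trans[of "ereal (2*D - 2*b)" "ereal (2*D - b)"] by (simp add: less_imp_le)
        ultimately have "ereal (2*D - 2*b) \<le> v (u*u)" using vbb by simp
        then have U: "2*D - 2*b \<le> 2*U" using vU val_mult[OF V, of u u] by simp
        have E: "2*D - b < 2*E" using c0 vE val_mult[OF V, of e e] by simp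
        have v2eu: "v (2*e*u) = ereal (W + E + U)" using val_mult[OF V] v2 vE vU by simp
        have "W + E + U > 2*D - b" using U E lt' by linarith
        then have "ereal (2*D - b) < min (v (\<beta>*\<delta> - 2*e*u)) (v (2*e*u))" using c1 v2eu by simp
        also have "\<dots> \<le> v (\<beta>*\<delta>)" using val_ultra[OF V, of "\<beta>*\<delta> - 2*e*u" "2*e*u"] by simp
        finally show False using vbd by simp
      qed
    qed
  qed
qed



lemma ceil_half: "nat \<lceil>(1::real) / 2\<rceil> = 1"
proof -
  have "\<lceil>(1::real) / 2\<rceil> = 1" by (simp add: ceiling_eq_iff)
  then show ?thesis by simp
qed

lemma sqrt_exists: assumes "alg_closed TYPE('L::field)" shows "\<exists>e::'L. e*e = c"
proof -
  have d: "degree [:-c, 0, 1::'L:] = 2" by simp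
  have "\<exists>x. poly [:-c, 0, 1:] x = 0" using assms d unfolding alg_closed_def by (metis one_le_numeral)
  then obtain x where "poly [:-c, 0, 1:] x = 0" by blast
  then show ?thesis by (auto simp: algebra_simps)
qed

lemma tminus_core:
  assumes V: "is_valuation v" and AC: "alg_closed TYPE('L::field)"
    and vg: "v (\<alpha> - a3) = ereal D" and vb: "v \<beta> = ereal (D + b)"
    and b0: "0 \<le> b" and v2: "v (2::'L) = ereal W"
  shows "tdisc v {#a3#} \<alpha> \<beta> = min (ereal b) (2 * v 2)"
proof -
  define \<gamma> where "\<gamma> = \<alpha> - a3"
  have bnz: "\<beta> \<noteq> 0" using vb val_zero[OF V] by auto
  have h: "pcompose (poly_of_roots {#a3#}) [:\<alpha>, \<beta>:] = [:\<gamma>, \<beta>:]"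
    unfolding poly_of_roots_def \<gamma>_def by (simp add: pcompose_pCons algebra_simps)
  have vh: "vpoly v [:\<gamma>, \<beta>:] = ereal D"
    using vpoly3[of v \<gamma> \<beta> 0, OF val_zero[OF V]] val_zero[OF V] vg vb b0 \<gamma>_def by simp
  have degh: "degree [:\<gamma>, \<beta>:] = 1" using bnz by simp
  obtain e0 where e0: "e0 * e0 = \<gamma>" using sqrt_exists[OF AC] by blast
  have psd0: "is_psd [:\<gamma>, \<beta>:] [:e0:] [:0, \<beta>:]"
    unfolding is_psd_def degh by (simp add: power2_eq_square e0)
  have vr0: "vpoly v [:0, \<beta>:] = ereal (D + b)"
    using vpoly3[of v 0 \<beta> 0, OF val_zero[OF V]] val_zero[OF V] vb by simp
  have t0: "tpsd v [:\<gamma>, \<beta>:] [:0, \<beta>:] = ereal b"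
    unfolding tpsd_def vr0 vh by simp
  show ?thesis
  proof (rule tdisc_eval[OF psd0[folded h] t0[folded h]])
    fix q \<rho>
    assume ps: "is_psd (pcompose (poly_of_roots {#a3#}) [:\<alpha>, \<beta>:]) q \<rho>"
      and lt: "ereal b < 2 * v 2"
    have lt': "b < 2 * W" using lt v2 by simp
    have dq: "degree q \<le> 1" using ps ceil_half unfolding is_psd_def h degh by simp
    define e where "e = coeff q 0"
    define u where "u = coeff q 1"
    have qf: "q = [:e, u:]" unfolding e_def u_def by (rule deg1_form[OF dq])
    have rf: "\<rho> = [:\<gamma> - e*e, \<beta> - 2*e*u, - (u*u):]"
    proof -
      have "\<rho> = [:\<gamma>, \<beta>, 0:] - [:e*e, 2*e*u, u*u:]"
        using ps unfolding is_psd_def h qf sq_lin by (simp add: eq_diff_eq)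
      then show ?thesis by simp
    qed
    show "tpsd v (pcompose (poly_of_roots {#a3#}) [:\<alpha>, \<beta>:]) \<rho> \<le> ereal b"
    proof (rule ccontr)
      assume "\<not> ?thesis"
      then have gt: "ereal b < vpoly v \<rho> - ereal D" unfolding tpsd_def h vh by simp
      have "ereal (D + b) < vpoly v \<rho>"
      proof (cases "vpoly v \<rho>")
        case (real r) then show ?thesis using gt by simp
      next
        case PInf then show ?thesis by simp
      next
        case MInf then show ?thesis using gt by simp
      qed
      then have c0: "ereal (D + b) < v (\<gamma> - e*e)" and c1: "ereal (D + b) < v (\<beta> - 2*e*u)"
        and c2: "ereal (D + b) < v (u*u)"
        using vpoly_le[of v \<rho> 0] vpoly_le[of v \<rho> 1] vpoly_le[of v \<rho> 2] val_uminus[OF V, of "u*u"]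
        unfolding rf by (auto simp: numeral_2_eq_2)
      show False
      proof (cases "e = 0 \<or> u = 0")
        case True
        then show False using c1 vb by auto
      next
        case False
        then obtain E U where vE: "v e = ereal E" and vU: "v u = ereal U"
          using val_real[OF V] by metis
        have "min (v \<gamma>) (v (\<gamma> - e*e)) \<le> v (e*e)"
          using val_diff[OF V, of "\<gamma>" "\<gamma> - e*e"] by simp
        moreover have "ereal D \<le> v (\<gamma> - e*e)"
          using c0 b0 order_trans[of "ereal D" "ereal (D + b)"] by (simp add: less_imp_le)
        ultimately have "ereal D \<le> v (e*e)" using vg \<gamma>_def by simp
        then have E: "D \<le> 2*E" using vE val_mult[OF V, of e e] by simp
        have U: "D + b < 2*U" using c2 vU val_mult[OF V, of u u] by simp
        have v2eu: "v (2*e*u) = ereal (W + E + U)" using val_mult[OF V] v2 vE vU by simp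
        have "W + E + U > D + b" using U E lt' by linarith
        then have "ereal (D + b) < min (v (\<beta> - 2*e*u)) (v (2*e*u))" using c1 v2eu by simp
        also have "\<dots> \<le> v \<beta>" using val_ultra[OF V, of "\<beta> - 2*e*u" "2*e*u"] by simp
        finally show False using vb by simp
      qed
    qed
  qed
qed



lemma val_power: assumes V: "is_valuation v" and "v x = ereal r" shows "v (x^k) = ereal (real k * r)"
  by (induction k) (simp_all add: val_one[OF V] val_mult[OF V] assms(2) algebra_simps zero_ereal_def)

lemma val_inverse: assumes V: "is_valuation v" and "x \<noteq> 0" "v x = ereal r" shows "v (inverse x) = ereal (- r)"
proof -
  have "v (x * inverse x) = 0" using assms(2) val_one[OF V] by simp
  then have "ereal r + v (inverse x) = 0" using val_mult[OF V] assms(3) by simp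
  then show ?thesis by (cases "v (inverse x)") (auto simp: zero_ereal_def)
qed

lemma exists_val:
  assumes V: "is_valuation v" and AC: "alg_closed TYPE('L::field_char_0)" and DK: "discrete_on v K"
  shows "\<exists>\<beta>::'L. v \<beta> = ereal (real_of_rat q)"
proof -
  obtain c where c0: "c > 0" and img: "v ` (K - {0}) = {ereal (real_of_rat (of_int n * c)) | n. True}"
    using DK unfolding discrete_on_def by blast
  have "ereal (real_of_rat (of_int 1 * c)) \<in> v ` (K - {0})" unfolding img by blast
  then obtain \<pi> where pK: "\<pi> \<in> K - {0}" and vp0: "ereal (real_of_rat (of_int 1 * c)) = v \<pi>"
    by (rule imageE)
  have pnz: "\<pi> \<noteq> 0" using pK by simp
  have vp: "v \<pi> = ereal (real_of_rat c)" using vp0 by simp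
  obtain m n where mn: "quotient_of (q / c) = (m, n)" by (cases "quotient_of (q / c)") auto
  have n0: "n > 0" using quotient_of_denom_pos[OF mn] .
  have qc: "q / c = of_int m / of_int n" using quotient_of_div[OF mn] .
  define y where "y = (if m \<ge> 0 then \<pi> ^ nat m else inverse \<pi> ^ nat (- m))"
  have ynz: "y \<noteq> 0" using pnz unfolding y_def by simp
  have vy: "v y = ereal (real_of_int m * real_of_rat c)"
  proof (cases "m \<ge> 0")
    case True then show ?thesis unfolding y_def using val_power[OF V vp, of "nat m"] by simp
  next
    case False then show ?thesis unfolding y_def
      using val_power[OF V val_inverse[OF V pnz vp], of "nat (-m)"] by simp
  qed
  have dg: "degree (monom (1::'L) (nat n) - [:y:]) = nat n"
  proof -
    have e: "monom (1::'L) (nat n) - [:y:] = monom 1 (nat n) + [:-y:]" by simp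
    have "degree (monom (1::'L) (nat n) + [:-y:]) = degree (monom (1::'L) (nat n))"
      by (rule degree_add_eq_left) (use n0 in \<open>simp add: degree_monom_eq\<close>)
    then show ?thesis unfolding e by (simp add: degree_monom_eq)
  qed
  then obtain x where "poly (monom (1::'L) (nat n) - [:y:]) x = 0"
    using AC n0 unfolding alg_closed_def by (metis One_nat_def Suc_leI zero_less_nat_eq)
  then have xn: "x ^ nat n = y" by (simp add: poly_monom)
  then have xnz: "x \<noteq> 0" using ynz n0 by auto
  obtain r where vx: "v x = ereal r" using val_real[OF V xnz] by metis
  have "ereal (real (nat n) * r) = ereal (real_of_int m * real_of_rat c)"
    using val_power[OF V vx, of "nat n"] xn vy by simp
  then have rr: "real_of_int n * r = real_of_int m * real_of_rat c" using n0 by simp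
  have "real_of_rat q = real_of_rat c * (real_of_int m / real_of_int n)"
  proof -
    have "q = c * (of_int m / of_int n)" using qc c0 by (simp add: field_simps)
    then show ?thesis by (simp add: of_rat_mult of_rat_divide)
  qed
  also have "\<dots> = r" using rr n0 by (simp add: field_simps)
  finally show ?thesis using vx by auto
qed

lemma b0_eval:
  assumes F: "\<And>b. 0 \<le> b \<Longrightarrow> F b = min (ereal (real_of_rat b)) (2 * v 2)"
    and v2: "v 2 = ereal (real_of_rat r)" and r0: "0 \<le> r"
  shows "b0 v F = 2 * r"
  unfolding b0_def
proof (rule Least_equality)
  show "0 \<le> 2 * r \<and> F (2 * r) = 2 * v 2"
    using F[of "2*r"] r0 v2 by (simp add: of_rat_mult)
next
  fix y assume H: "0 \<le> y \<and> F y = 2 * v 2"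
  have y0: "0 \<le> y" using H by simp
  have "F y = min (ereal (real_of_rat y)) (2 * v 2)" using F[OF y0] .
  then have "min (ereal (real_of_rat y)) (ereal (2 * real_of_rat r)) = ereal (2 * real_of_rat r)"
    using H v2 by simp
  then have "2 * real_of_rat r \<le> real_of_rat y" by (simp add: min_def split: if_splits)
  then have "(real_of_rat (2 * r)) \<le> real_of_rat y" by (simp add: of_rat_mult)
  then show "2 * r \<le> y" by (simp only: of_rat_less_eq)
qed



lemma sep_no_double:
  fixes f :: "'L::field_char_0 poly"
  assumes cp: "coprime f (pderiv f)"
  shows "\<not> [:-r, 1:]^2 dvd f"
proof
  define p where "p = [:-r, 1::'L:]"
  have pd: "pderiv p = 1" unfolding p_def by (simp add: pderiv_pCons)
  assume "[:-r, 1:]^2 dvd f"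
  then obtain k where k: "f = p^2 * k" unfolding p_def by (elim dvdE)
  have "f = p * (p * k)" using k by (simp only: power2_eq_square mult.assoc)
  then have d1: "p dvd f" by (rule dvdI)
  have "pderiv f = p * (p * pderiv k + k + k)"
    unfolding k power2_eq_square by (simp only: pderiv_mult pd) (simp add: algebra_simps)
  then have d2: "p dvd pderiv f" by simp
  have "is_unit p" using coprime_common_divisor[OF cp d1 d2] .
  then show False using is_unit_iff_degree[of p] unfolding p_def by simp
qed

lemma roots3:
  fixes f :: "'L::field_char_0 poly"
  assumes deg: "degree f = 3" and cp: "coprime f (pderiv f)"
    and r1: "poly f a1 = 0" and r2: "poly f a2 = 0" and ne: "a1 \<noteq> a2"
  shows "\<exists>a3. a3 \<noteq> a1 \<and> a3 \<noteq> a2 \<and> {x. poly f x = 0} = {a1, a2, a3}"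
proof -
  obtain f1 where f1: "f = [:-a1, 1:] * f1" using r1 by (metis poly_eq_0_iff_dvd dvdE)
  have "poly f1 a2 = 0" using r2 ne unfolding f1 by simp
  then obtain f2 where f2: "f1 = [:-a2, 1:] * f2" by (metis poly_eq_0_iff_dvd dvdE)
  have ff: "f = [:-a1, 1:] * [:-a2, 1:] * f2" using f1 f2 by (metis mult.assoc)
  have fnz: "f \<noteq> 0" using deg by auto
  then have f2nz: "f2 \<noteq> 0" using ff by auto
  have "degree f = 2 + degree f2" unfolding ff using f2nz
    by (subst degree_mult_eq) (auto simp: degree_mult_eq)
  then have d2: "degree f2 = 1" using deg by simp
  define c0 where "c0 = coeff f2 0"
  define c1 where "c1 = coeff f2 1"
  have f2f: "f2 = [:c0, c1:]" unfolding c0_def c1_def by (rule deg1_form) (simp add: d2)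
  have c1nz: "c1 \<noteq> 0" using d2 f2f by (auto split: if_splits)
  define a3 where "a3 = - c0 / c1"
  have p3: "poly f2 a3 = 0" unfolding f2f a3_def using c1nz by simp
  have na1: "a3 \<noteq> a1"
  proof
    assume "a3 = a1"
    then have "[:-a1, 1:] dvd f2" using p3 by (simp add: poly_eq_0_iff_dvd)
    then obtain k where "f2 = [:-a1, 1:] * k" by (elim dvdE)
    then have "f = [:-a1, 1:]^2 * ([:-a2, 1:] * k)" unfolding ff by (simp only: power2_eq_square ac_simps)
    then show False using sep_no_double[OF cp, of a1] by simp
  qed
  have na2: "a3 \<noteq> a2"
  proof
    assume "a3 = a2"
    then have "[:-a2, 1:] dvd f2" using p3 by (simp add: poly_eq_0_iff_dvd)
    then obtain k where "f2 = [:-a2, 1:] * k" by (elim dvdE)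
    then have "f = [:-a2, 1:]^2 * ([:-a1, 1:] * k)" unfolding ff by (simp only: power2_eq_square ac_simps)
    then show False using sep_no_double[OF cp, of a2] by simp
  qed
  have "{x. poly f x = 0} = {a1, a2, a3}"
  proof (intro set_eqI iffI)
    fix x assume "x \<in> {x. poly f x = 0}"
    then have "(x - a1) * (x - a2) * (c0 + x * c1) = 0" unfolding ff f2f by (simp add: algebra_simps)
    then have "x = a1 \<or> x = a2 \<or> c0 + x * c1 = 0" by auto
    moreover have "c0 + x * c1 = 0 \<Longrightarrow> x = a3"
    proof -
      assume "c0 + x * c1 = 0"
      then have "x * c1 = - c0" by (simp add: eq_neg_iff_add_eq_0 add.commute)
      then show "x = a3" unfolding a3_def using c1nz by (metis minus_divide_left nonzero_mult_div_cancel_right)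
    qed
    ultimately show "x \<in> {a1, a2, a3}" by blast
  next
    fix x assume "x \<in> {a1, a2, a3}"
    then show "x \<in> {x. poly f x = 0}" using p3 unfolding ff by (auto simp: algebra_simps)
  qed
  then show ?thesis using na1 na2 by blast
qed



theorem corollary1p3:
  fixes K :: "'L::field_char_0 set" and v :: "'L \<Rightarrow> ereal"
    and f :: "'L poly" and g :: nat and s :: "'L set" and \<alpha> :: 'L
  assumes "dvf_setting K v"
    and "\<forall>i. coeff f i \<in> K"
    and "degree f = 2 * g + 1"
    and "coprime f (pderiv f)"
    and "g = 1"
    and "is_cluster v {x. poly f x = 0} s"
    and "card s = 2"
    and "\<alpha> \<in> s"
  shows "Bfs v {x. poly f x = 0} s \<alpha> = 4 * v 2"
proof -
  define R where "R = {x. poly f x = 0}"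
  have V: "is_valuation v" and AC: "alg_closed TYPE('L)" and DK: "discrete_on v K"
    and v2pos: "0 < v (2::'L)"
    using assms(1) unfolding dvf_setting_def by auto
  obtain \<alpha>0 bb where sR: "s = disc v \<alpha>0 (ereal (real_of_rat bb)) \<inter> R"
    using assms(6) unfolding is_cluster_def R_def by blast
  define B where "B = ereal (real_of_rat bb)"
  obtain x y where sxy: "s = {x, y}" "x \<noteq> y" using assms(7) card_2_iff by metis
  obtain a' where sa: "s = {\<alpha>, a'}" and na: "a' \<noteq> \<alpha>"
    using sxy assms(8) by (metis doubleton_eq_iff insertE singletonD)
  have rA: "poly f \<alpha> = 0" and rA': "poly f a' = 0" using sR sa unfolding R_def by auto
  obtain a3 where n31: "a3 \<noteq> \<alpha>" and n32: "a3 \<noteq> a'" and RR: "R = {\<alpha>, a', a3}"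
    using roots3[OF _ assms(4) rA rA' na[symmetric]] assms(3,5) unfolding R_def by auto
  have dA: "B \<le> v (\<alpha> - \<alpha>0)" and dA': "B \<le> v (a' - \<alpha>0)" and d3: "\<not> B \<le> v (a3 - \<alpha>0)"
    using sR sa RR n31 n32 unfolding disc_def B_def by blast+
  obtain w where w: "v (2::'L) = ereal (real_of_rat w)" using val_nz[OF V, of 2] by auto
  have w0: "0 \<le> w" using v2pos w by simp
  obtain Dq where Dq: "v (\<alpha> - a') = ereal (real_of_rat Dq)" using val_nz[OF V, of "\<alpha> - a'"] na by auto
  obtain Dq' where Dq': "v (\<alpha> - a3) = ereal (real_of_rat Dq')" using val_nz[OF V, of "\<alpha> - a3"] n31 by auto
  have BA: "B \<le> v (\<alpha> - a')"
  proof -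
    have "B \<le> min (v (\<alpha> - \<alpha>0)) (v (a' - \<alpha>0))" using dA dA' by (simp only: min.bounded_iff)
    also have "\<dots> \<le> v ((\<alpha> - \<alpha>0) - (a' - \<alpha>0))" by (rule val_diff[OF V])
    also have "(\<alpha> - \<alpha>0) - (a' - \<alpha>0) = \<alpha> - a'" by simp
    finally show ?thesis .
  qed
  have sA: "v (a' - \<alpha>) = v (\<alpha> - a')" by (rule val_sym[OF V])
  have s3: "v (a3 - \<alpha>) = v (\<alpha> - a3)" by (rule val_sym[OF V])
  have s3': "v (a3 - a') = v (a' - a3)" by (rule val_sym[OF V])
  have l1: "v (\<alpha> - a3) < B"
  proof (rule ccontr)
    assume "\<not> ?thesis"
    then have "B \<le> v (a3 - \<alpha>)" unfolding s3 by (simp only: not_less)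
    then have "B \<le> min (v (a3 - \<alpha>)) (v (\<alpha> - \<alpha>0))" using dA by (simp only: min.bounded_iff)
    also have "\<dots> \<le> v ((a3 - \<alpha>) + (\<alpha> - \<alpha>0))" by (rule val_ultra[OF V])
    also have "(a3 - \<alpha>) + (\<alpha> - \<alpha>0) = a3 - \<alpha>0" by simp
    finally show False using d3 by (simp only: not_True_eq_False)
  qed
  have l2: "v (a' - a3) < B"
  proof (rule ccontr)
    assume "\<not> ?thesis"
    then have "B \<le> v (a3 - a')" unfolding s3' by (simp only: not_less)
    then have "B \<le> min (v (a3 - a')) (v (a' - \<alpha>0))" using dA' by (simp only: min.bounded_iff)
    also have "\<dots> \<le> v ((a3 - a') + (a' - \<alpha>0))" by (rule val_ultra[OF V])
    also have "(a3 - a') + (a' - \<alpha>0) = a3 - \<alpha>0" by simp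
    finally show False using d3 by (simp only: not_True_eq_False)
  qed
  have dd: "v (\<alpha> - a3) < v (\<alpha> - a')" using l1 BA by (rule less_le_trans)
  have e3: "v (a' - a3) = v (\<alpha> - a3)"
  proof (rule antisym)
    have "min (v (a' - \<alpha>)) (v (\<alpha> - a3)) = v (\<alpha> - a3)"
      unfolding sA using dd by (simp only: min_absorb2 less_imp_le)
    then have "v (\<alpha> - a3) = min (v (a' - \<alpha>)) (v (\<alpha> - a3))" by (rule sym)
    also have "\<dots> \<le> v ((a' - \<alpha>) + (\<alpha> - a3))" by (rule val_ultra[OF V])
    also have "(a' - \<alpha>) + (\<alpha> - a3) = a' - a3" by simp
    finally show "v (\<alpha> - a3) \<le> v (a' - a3)" .
    show "v (a' - a3) \<le> v (\<alpha> - a3)"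
    proof (rule ccontr)
      assume "\<not> ?thesis"
      then have lt: "v (\<alpha> - a3) < v (a' - a3)" by (simp only: not_le)
      have "v (\<alpha> - a3) < min (v (\<alpha> - a')) (v (a' - a3))" using lt dd by simp
      also have "\<dots> \<le> v ((\<alpha> - a') + (a' - a3))" by (rule val_ultra[OF V])
      also have "(\<alpha> - a') + (a' - a3) = \<alpha> - a3" by simp
      finally show False by (simp only: less_irrefl)
    qed
  qed
  have ds: "dplus v s = v (\<alpha> - a')"
  proof -
    have "{v (a - b) | a b. a \<in> s \<and> b \<in> s \<and> a \<noteq> b} = {v (\<alpha> - a')}"
      unfolding sa using na val_sym[OF V, of a' \<alpha>] by auto
    then show ?thesis unfolding dplus_def by simp
  qed
  have dR: "dplus v R = v (\<alpha> - a3)"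
  proof -
    have "{v (a - b) | a b. a \<in> R \<and> b \<in> R \<and> a \<noteq> b} = {v (\<alpha> - a'), v (\<alpha> - a3)}"
      unfolding RR using na n31 n32 val_sym[OF V, of a' \<alpha>] val_sym[OF V, of a3 \<alpha>]
        val_sym[OF V, of a3 a'] e3 by auto
    then show ?thesis unfolding dplus_def using dd by (simp add: min_absorb2 less_imp_le)
  qed
  have clR: "is_cluster v R R"
  proof -
    have "R = disc v \<alpha> (ereal (real_of_rat Dq')) \<inter> R"
      unfolding disc_def RR using Dq' dd e3 val_zero[OF V] val_sym[OF V, of a' \<alpha>] val_sym[OF V, of a3 \<alpha>] val_sym[OF V, of a3 a']
      by (auto simp: less_imp_le)
    then show ?thesis unfolding is_cluster_def RR by blast
  qed
  have sub: "s \<subset> R" unfolding sa RR using n31 n32 by blast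
  have cl_sub: "\<And>c. is_cluster v R c \<Longrightarrow> c \<subseteq> R" unfolding is_cluster_def by auto
  have key: "c = R" if c1: "c \<subseteq> R" and c2: "s \<subset> c" for c
  proof -
    obtain x where x1: "x \<in> c" and x2: "x \<notin> s" using c2 by blast
    have "x \<in> R" using x1 c1 by blast
    then have "x = a3" using x2 unfolding RR sa by blast
    then have "a3 \<in> c" using x1 by simp
    moreover have "s \<subseteq> c" using c2 by blast
    ultimately have "R \<subseteq> c" unfolding RR sa by blast
    then show "c = R" using c1 by (rule equalityI[rotated])
  qed
  have par: "parent v R s = R"
    unfolding parent_def
  proof (rule the_equality)
    show "is_cluster v R R \<and> s \<subset> R \<and> (\<forall>c. is_cluster v R c \<and> s \<subset> c \<longrightarrow> R \<subseteq> c)"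
    proof (intro conjI allI impI clR sub)
      fix c assume H: "is_cluster v R c \<and> s \<subset> c"
      then have "c = R" using key cl_sub by blast
      then show "R \<subseteq> c" by simp
    qed
  next
    fix p assume "is_cluster v R p \<and> s \<subset> p \<and> (\<forall>c. is_cluster v R c \<and> s \<subset> c \<longrightarrow> p \<subseteq> c)"
    then have "p \<subseteq> R" "s \<subset> p" using cl_sub by blast+
    then show "p = R" by (rule key)
  qed
  have dm: "dminus v R s = v (\<alpha> - a3)" unfolding dminus_def par dR ..
  have ms: "mset_set s = {#\<alpha>, a'#}" unfolding sa using na by simp
  have ms3: "mset_set (R - s) = {#a3#}"
  proof -
    have "R - s = {a3}" unfolding RR sa using n31 n32 by blast
    then show ?thesis by simp
  qed
  have tp: "tplus v s \<alpha> b = min (ereal (real_of_rat b)) (2 * v 2)" if b0: "0 \<le> b" for b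
  proof -
    have ex: "\<exists>\<beta>. v \<beta> = ereal (real_of_rat (Dq - b))" by (rule exists_val[OF V AC DK])
    have vb: "v (SOME \<beta>. v \<beta> = ereal (real_of_rat (Dq - b))) = ereal (real_of_rat Dq - real_of_rat b)"
      using someI_ex[OF ex] by (simp add: of_rat_diff)
    have "tplus v s \<alpha> b = tdisc v {#\<alpha>, a'#} \<alpha> (SOME \<beta>. v \<beta> = ereal (real_of_rat (Dq - b)))"
      unfolding tplus_def tdisc_r_def ms ds Dq by (simp add: of_rat_diff)
    also have "\<dots> = min (ereal (real_of_rat b)) (2 * v 2)"
      by (rule tplus_core[OF V Dq vb _ w]) (use b0 in simp)
    finally show ?thesis .
  qed
  have tm: "tminus v R s \<alpha> b = min (ereal (real_of_rat b)) (2 * v 2)" if b0: "0 \<le> b" for b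
  proof -
    have ex: "\<exists>\<beta>. v \<beta> = ereal (real_of_rat (Dq' + b))" by (rule exists_val[OF V AC DK])
    have vb: "v (SOME \<beta>. v \<beta> = ereal (real_of_rat (Dq' + b))) = ereal (real_of_rat Dq' + real_of_rat b)"
      using someI_ex[OF ex] by (simp add: of_rat_add)
    have "tminus v R s \<alpha> b = tdisc v {#a3#} \<alpha> (SOME \<beta>. v \<beta> = ereal (real_of_rat (Dq' + b)))"
      unfolding tminus_def tdisc_r_def ms3 dm Dq' by (simp add: of_rat_add)
    also have "\<dots> = min (ereal (real_of_rat b)) (2 * v 2)"
      by (rule tminus_core[OF V AC Dq' vb _ w]) (use b0 in simp)
    finally show ?thesis .
  qed
  have b1: "b0 v (tplus v s \<alpha>) = 2 * w" by (rule b0_eval[where F="tplus v s \<alpha>" and v=v and r=w, OF tp w w0])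
  have b2: "b0 v (tminus v R s \<alpha>) = 2 * w" by (rule b0_eval[where F="tminus v R s \<alpha>" and v=v and r=w, OF tm w w0])
  show ?thesis unfolding R_def[symmetric] Bfs_def b1 b2 w by (simp add: of_rat_add of_rat_mult)
qed


end
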